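(* Let $Z_1,\dots,Z_d$ be nonzero complex numbers with $|Z_1|\le\cdots\le|Z_d|$, not all of the same modulus, let $R=\min\{|Z_{i+1}|/|Z_i| : |Z_{i+1}|>|Z_i|\}$ and $I=\{i: 1\le i\le d-1,\ |Z_i|<|Z_{i+1}|\}\cup\{0,d\}$. Let $i_1<i_2$ be successive elements of $I$ (i.e. both in $I$ and no element of $I$ lies strictly between them), and let $i_1<l<i_2$. Then \[ |\sigma_{d-l}(Z)|\le\left(\binom{i_2-i_1}{i_2-l}+c'\right)|Z_{i_2}|^{i_2-l}\,|Z_{i_2+1}|\cdots|Z_d|, \] where $c'=\left(\binom{d}{l}-\binom{i_2-i_1}{i_2-l}\right)R^{-1}<2^dR^{-1}$.
   Context: $\sigma_k(Z)=\sum_{j_1<\dots<j_k}Z_{j_1}\cdots Z_{j_k}$ denotes the $k$-th elementary symmetric function of $Z=(Z_1,\dots,Z_d)$; an empty product equals $1$. *)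

theory Defs
  imports Complex_Main
begin

definition esym :: "nat \<Rightarrow> (nat \<Rightarrow> complex) \<Rightarrow> nat \<Rightarrow> complex" where
  "esym d Z k = (\<Sum>S | S \<subseteq> {1..d} \<and> card S = k. \<Prod>j\<in>S. Z j)"

definition jumpR :: "nat \<Rightarrow> (nat \<Rightarrow> complex) \<Rightarrow> real" where
  "jumpR d Z = Min {cmod (Z (Suc i)) / cmod (Z i) | i. 1 \<le> i \<and> i \<le> d - 1 \<and> cmod (Z i) < cmod (Z (Suc i))}"

definition jumpI :: "nat \<Rightarrow> (nat \<Rightarrow> complex) \<Rightarrow> nat set" where
  "jumpI d Z = {i. 1 \<le> i \<and> i \<le> d - 1 \<and> cmod (Z i) < cmod (Z (Suc i))} \<union> {0, d}"

end

theory Submission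
  imports Defs
begin

lemma desc_le:
  fixes a :: "nat \<Rightarrow> real"
  assumes "j \<le> i" "\<And>k. j \<le> k \<Longrightarrow> k < i \<Longrightarrow> a (Suc k) \<le> a k"
  shows "a i \<le> a j"
  using assms
proof (induction i rule: dec_induct)
  case base then show ?case by simp
next
  case (step n)
  have "a n \<le> a j" using step.IH step.prems by simp
  moreover have "a (Suc n) \<le> a n" using step.prems step.hyps by simp
  ultimately show ?case by simp
qed

theorem mainTheorem4:
  fixes d :: nat and Z :: "nat \<Rightarrow> complex" and i1 i2 l :: nat
  assumes nz: "\<And>i. 1 \<le> i \<Longrightarrow> i \<le> d \<Longrightarrow> Z i \<noteq> 0"
    and sorted: "\<And>i j. 1 \<le> i \<Longrightarrow> i \<le> j \<Longrightarrow> j \<le> d \<Longrightarrow> cmod (Z i) \<le> cmod (Z j)"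
    and not_all_eq: "\<exists>i\<in>{1..d}. \<exists>j\<in>{1..d}. cmod (Z i) \<noteq> cmod (Z j)"
    and i1I: "i1 \<in> jumpI d Z" and i2I: "i2 \<in> jumpI d Z" and i12: "i1 < i2"
    and succ: "\<forall>i\<in>jumpI d Z. \<not> (i1 < i \<and> i < i2)"
    and l: "i1 < l" "l < i2"
  shows "cmod (esym d Z (d - l))
           \<le> (real ((i2 - i1) choose (i2 - l))
               + (real (d choose l) - real ((i2 - i1) choose (i2 - l))) / jumpR d Z)
             * cmod (Z i2) ^ (i2 - l) * (\<Prod>j\<in>{i2+1..d}. cmod (Z j))
         \<and> (real (d choose l) - real ((i2 - i1) choose (i2 - l))) / jumpR d Z < 2 ^ d / jumpR d Z"
proof -
  define a where "a = (\<lambda>j. cmod (Z j))"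
  define R where "R = jumpR d Z"
  define m where "m = a i2"
  have apos: "1 \<le> i \<Longrightarrow> i \<le> d \<Longrightarrow> 0 < a i" for i using nz by (simp add: a_def)
  have anon: "0 \<le> a i" for i by (simp add: a_def)
  have srt: "1 \<le> i \<Longrightarrow> i \<le> j \<Longrightarrow> j \<le> d \<Longrightarrow> a i \<le> a j" for i j using sorted by (simp add: a_def)
  have i2d: "i2 \<le> d" using i2I i12 by (auto simp: jumpI_def)
  have l1: "1 \<le> l" using l by simp
  have jump1: "a i1 < a (Suc i1)" if "1 \<le> i1"
    using i1I that i12 i2d by (auto simp: jumpI_def a_def)
  have jump2: "a i2 < a (Suc i2)" if "i2 < d"
    using i2I that l by (auto simp: jumpI_def a_def)
  have blk: "a j = m" if "i1 + 1 \<le> j" "j \<le> i2" for j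
  proof -
    have "a i2 \<le> a j"
    proof (rule desc_le[OF that(2)])
      fix k assume k: "j \<le> k" "k < i2"
      have "k \<notin> jumpI d Z" using succ k that by auto
      then have "\<not> a k < a (Suc k)" using k that i2d by (auto simp: jumpI_def a_def)
      then show "a (Suc k) \<le> a k" by simp
    qed
    moreover have "a j \<le> a i2" using srt that i2d by simp
    ultimately show ?thesis by (simp add: m_def)
  qed
  define Rset where "Rset = {cmod (Z (Suc i)) / cmod (Z i) | i. 1 \<le> i \<and> i \<le> d - 1 \<and> cmod (Z i) < cmod (Z (Suc i))}"
  have RR: "R = Min Rset" by (simp add: R_def jumpR_def Rset_def)
  have finR: "finite Rset"
  proof -
    have "Rset \<subseteq> (\<lambda>i. cmod (Z (Suc i)) / cmod (Z i)) ` {1..d}" by (auto simp: Rset_def)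
    then show ?thesis by (rule finite_subset) simp
  qed
  have Rle: "R * a i \<le> a (Suc i)" if "1 \<le> i" "i < d" "a i < a (Suc i)" for i
  proof -
    have "a (Suc i) / a i \<in> Rset" using that by (auto simp: Rset_def a_def)
    then have "R \<le> a (Suc i) / a i" using finR RR by simp
    then show ?thesis using apos[of i] that by (simp add: pos_le_divide_eq)
  qed
  have Rne: "Rset \<noteq> {}"
  proof -
    obtain i j where ij: "i \<in> {1..d}" "j \<in> {1..d}" "a i \<noteq> a j" using not_all_eq a_def by auto
    define p where "p = min i j"
    define q where "q = max i j"
    have pq: "p \<le> q" "1 \<le> p" "q \<le> d" "a p < a q"
      using ij srt[of i j] srt[of j i] by (auto simp: p_def q_def min_def max_def)
    have "\<exists>k. p \<le> k \<and> k < q \<and> a k < a (Suc k)"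
    proof (rule ccontr)
      assume "\<not> ?thesis"
      then have "a q \<le> a p" by (intro desc_le[OF pq(1)]) (auto simp: not_less)
      then show False using pq by simp
    qed
    then obtain k where "p \<le> k" "k < q" "a k < a (Suc k)" by blast
    then have "a (Suc k) / a k \<in> Rset" using pq by (auto simp: Rset_def a_def)
    then show ?thesis by auto
  qed
  have Rpos: "0 < R"
  proof -
    have "R \<in> Rset" using Min_in[OF finR Rne] RR by simp
    then obtain i where "R = a (Suc i) / a i" "1 \<le> i" "i \<le> d - 1" "a i < a (Suc i)"
      by (auto simp: Rset_def a_def)
    moreover have "0 < a i" using apos calculation by simp
    ultimately show ?thesis by simp
  qed
  define T where "T = {l+1..d}"
  define P where "P = (\<lambda>A. \<Prod>j\<in>A. a j)"
  define Sset where "Sset = {S. S \<subseteq> {1..d} \<and> card S = d - l}"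
  define good where "good = (\<lambda>S. {i2+1..d} \<subseteq> S \<and> S \<subseteq> {i1+1..d})"
  have mnn: "0 \<le> m" by (simp add: m_def anon)
  have Pnn: "0 \<le> P A" for A by (simp add: P_def anon prod_nonneg)
  have key: "P S \<le> P T \<and> (good S \<longrightarrow> P S = P T) \<and> (\<not> good S \<longrightarrow> R * P S \<le> P T)"
    if S: "S \<in> Sset" for S
  proof -
    have finS: "finite S" and Ssub: "S \<subseteq> {1..d}" and cS: "card S = d - l"
      using S by (auto simp: Sset_def intro: finite_subset)
    have finT: "finite T" and cT: "card T = d - l" by (auto simp: T_def)
    define D1 where "D1 = S - T"
    define D2 where "D2 = T - S"
    define n where "n = card D1"
    have cD2: "card D2 = n"
      unfolding n_def D1_def D2_def using finS finT cS cT
      by (simp add: card_Diff_subset_Int Int_commute)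
    have finD1: "finite D1" and finD2: "finite D2" using finS finT by (auto simp: D1_def D2_def)
    have PS: "P S = P (S \<inter> T) * P D1" unfolding P_def D1_def by (rule prod.Int_Diff[OF finS])
    have PT: "P T = P (S \<inter> T) * P D2" unfolding P_def D2_def
      by (subst prod.Int_Diff[OF finT, of _ S]) (simp add: Int_commute)
    have D1le: "x \<in> D1 \<Longrightarrow> a x \<le> m" for x
    proof -
      assume x: "x \<in> D1"
      then have "1 \<le> x" "x \<le> l" using Ssub by (auto simp: D1_def T_def)
      then have "a x \<le> a l" using srt l i2d by simp
      then show ?thesis using blk[of l] l by simp
    qed
    have D2ge: "y \<in> D2 \<Longrightarrow> m \<le> a y" for y
    proof -
      assume y: "y \<in> D2"
      then have "l + 1 \<le> y" "y \<le> d" by (auto simp: D2_def T_def)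
      then have "a l \<le> a y" using srt l1 by simp
      then show ?thesis using blk[of l] l by simp
    qed
    have PD1: "P D1 \<le> m ^ n"
    proof -
      have "P D1 \<le> (\<Prod>j\<in>D1. m)" unfolding P_def by (rule prod_mono) (simp add: anon D1le)
      then show ?thesis by (simp add: n_def)
    qed
    have PD2: "m ^ n \<le> P D2"
    proof -
      have "(\<Prod>j\<in>D2. m) \<le> P D2" unfolding P_def
        by (rule prod_mono) (simp add: mnn D2ge)
      then show ?thesis by (simp add: cD2)
    qed
    have A: "P S \<le> P T" unfolding PS PT
      by (rule mult_left_mono[OF order.trans[OF PD1 PD2] Pnn])
    have B: "P S = P T" if g: "good S"
    proof -
      have "\<forall>x\<in>D1. a x = m"
      proof
        fix x assume x: "x \<in> D1"
        then have "x \<in> S" "x \<notin> T" by (auto simp: D1_def)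
        then have "i1 + 1 \<le> x" "x \<le> i2" using g Ssub l by (auto simp: good_def T_def)
        then show "a x = m" by (rule blk)
      qed
      then have "P D1 = m ^ n" unfolding P_def n_def by simp
      moreover have "\<forall>x\<in>D2. a x = m" using g l
        by (auto simp: good_def D2_def T_def intro!: blk) (meson not_less_eq_eq subsetD atLeastAtMost_iff)+
      then have "P D2 = m ^ n" unfolding P_def using cD2 by simp
      ultimately show ?thesis unfolding PS PT by simp
    qed
    have C: "R * P S \<le> P T" if g: "\<not> good S"
    proof -
      have "R * P D1 \<le> P D2"
      proof (cases "\<exists>x\<in>S. x \<le> i1")
        case True
        then obtain x where x: "x \<in> S" "x \<le> i1" by blast
        have x1: "1 \<le> x" using x Ssub by auto
        have xD: "x \<in> D1" using x l by (auto simp: D1_def T_def)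
        have "a x \<le> a i1" using srt x x1 l i2d by simp
        moreover have "R * a i1 \<le> a (Suc i1)" using Rle[of i1] jump1 x x1 l i2d by simp
        moreover have "a (Suc i1) = m" using blk l by simp
        ultimately have Rx: "R * a x \<le> m" using Rpos
          by (meson mult_left_mono order.trans less_imp_le)
        have n1: "1 \<le> n" using xD finD1 n_def card_gt_0_iff[of D1] by (auto simp del: card_gt_0_iff)
        have "P (D1 - {x}) \<le> m ^ (n - 1)"
        proof -
          have "P (D1 - {x}) \<le> (\<Prod>j\<in>D1 - {x}. m)" unfolding P_def
            by (rule prod_mono) (simp add: anon D1le)
          then show ?thesis using xD finD1 by (simp add: n_def)
        qed
        have "R * P D1 = (R * a x) * P (D1 - {x})"
          unfolding P_def using prod.remove[OF finD1 xD, of a] by simp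
        also have "\<dots> \<le> m * m ^ (n - 1)"
          by (rule mult_mono[OF Rx \<open>P (D1 - {x}) \<le> m ^ (n - 1)\<close>]) (auto simp: m_def anon Pnn)
        also have "\<dots> = m ^ n" using n1 by (metis Suc_diff_le diff_Suc_1 power_Suc)
        finally show ?thesis using PD2 by simp
      next
        case False
        then have "\<exists>y\<in>{i2+1..d}. y \<notin> S" using g Ssub by (fastforce simp: good_def not_le subset_iff)
        then obtain y where y: "i2 + 1 \<le> y" "y \<le> d" "y \<notin> S" by auto
        have yD: "y \<in> D2" using y l by (auto simp: D2_def T_def)
        have "R * m \<le> a (Suc i2)" using Rle[of i2] jump2 y l by (simp add: m_def)
        moreover have "a (Suc i2) \<le> a y" using srt y by simp
        ultimately have Ry: "R * m \<le> a y" by simp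
        have n1: "1 \<le> n" using yD finD2 cD2 card_gt_0_iff[of D2] by (auto simp del: card_gt_0_iff)
        have q: "m ^ (n - 1) \<le> P (D2 - {y})"
        proof -
          have "(\<Prod>j\<in>D2 - {y}. m) \<le> P (D2 - {y})" unfolding P_def
            by (rule prod_mono) (simp add: mnn D2ge)
          then show ?thesis using yD finD2 cD2 by simp
        qed
        have "R * P D1 \<le> R * m ^ n" using PD1 Rpos by simp
        also have "\<dots> = (R * m) * m ^ (n - 1)" using n1
          by (metis Suc_diff_le diff_Suc_1 power_Suc mult.assoc)
        also have "\<dots> \<le> a y * P (D2 - {y})"
          by (rule mult_mono[OF Ry q]) (auto simp: anon m_def)
        also have "\<dots> = P D2" unfolding P_def using prod.remove[OF finD2 yD, of a] by simp
        finally show ?thesis .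
      qed
      then have "P (S \<inter> T) * (R * P D1) \<le> P (S \<inter> T) * P D2" by (rule mult_left_mono) (rule Pnn)
      then show ?thesis unfolding PS PT by (simp add: algebra_simps)
    qed
    show ?thesis using A B C by blast
  qed
  define G where "G = {S \<in> Sset. good S}"
  define C where "C = (i2 - i1) choose (i2 - l)"
  define M where "M = P T"
  have finSset: "finite Sset" unfolding Sset_def
    by (rule finite_subset[of _ "Pow {1..d}"]) auto
  have cSset: "card Sset = d choose l"
  proof -
    have "card Sset = card {1..d} choose (d - l)" unfolding Sset_def by (rule n_subsets) simp
    then show ?thesis using l i2d by (simp add: binomial_symmetric[symmetric])
  qed
  define B where "B = {i1+1..i2}"
  define H where "H = {i2+1..d}"
  define U where "U = {V. V \<subseteq> B \<and> card V = i2 - l}"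
  have GU: "G = (\<lambda>V. V \<union> H) ` U"
  proof
    show "(\<lambda>V. V \<union> H) ` U \<subseteq> G"
    proof
      fix S assume "S \<in> (\<lambda>V. V \<union> H) ` U"
      then obtain V where V: "V \<subseteq> B" "card V = i2 - l" "S = V \<union> H" by (auto simp: U_def)
      have "V \<inter> H = {}" using V by (auto simp: B_def H_def)
      moreover have "finite V" using V by (auto simp: B_def intro: finite_subset)
      ultimately have "card S = (i2 - l) + (d - i2)" using V by (simp add: card_Un_disjoint H_def)
      then have "card S = d - l" using l i2d by simp
      moreover have "S \<subseteq> {1..d}" "good S" using V i2d i12 by (auto simp: B_def H_def good_def)
      ultimately show "S \<in> G" by (simp add: G_def Sset_def)
    qed
  next
    show "G \<subseteq> (\<lambda>V. V \<union> H) ` U"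
    proof
      fix S assume S: "S \<in> G"
      then have g: "H \<subseteq> S" "S \<subseteq> {i1+1..d}" and cS: "card S = d - l"
        by (auto simp: G_def good_def H_def Sset_def)
      have SV: "S = (S \<inter> B) \<union> H" using g by (auto simp: B_def H_def)
      have "card S = card (S \<inter> B) + card H"
        by (subst SV, rule card_Un_disjoint) (auto simp: B_def H_def)
      then have "card (S \<inter> B) = i2 - l" using cS l i2d by (simp add: H_def)
      then have "S \<inter> B \<in> U" by (simp add: U_def)
      then show "S \<in> (\<lambda>V. V \<union> H) ` U" using SV by blast
    qed
  qed
  have cG: "card G = C"
  proof -
    have "inj_on (\<lambda>V. V \<union> H) U"
    proof (rule inj_onI)
      fix x y assume "x \<in> U" "y \<in> U" "x \<union> H = y \<union> H"
      moreover have "V \<in> U \<Longrightarrow> V = (V \<union> H) \<inter> B" for V by (auto simp: U_def B_def H_def)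
      ultimately show "x = y" by metis
    qed
    then have "card G = card U" using GU card_image by blast
    also have "\<dots> = card B choose (i2 - l)" unfolding U_def by (rule n_subsets) (simp add: B_def)
    finally show ?thesis by (simp add: B_def C_def)
  qed
  have GS: "G \<subseteq> Sset" by (auto simp: G_def)
  have finG: "finite G" using finSset GS by (rule finite_subset[rotated])
  have cBad: "real (card (Sset - G)) = real (d choose l) - real C"
    using card_Diff_subset[OF finG GS] card_mono[OF finSset GS] cSset cG by simp
  have "cmod (esym d Z (d - l)) \<le> (\<Sum>S\<in>Sset. cmod (\<Prod>j\<in>S. Z j))"
    unfolding esym_def Sset_def by (rule norm_sum)
  also have "\<dots> = (\<Sum>S\<in>Sset. P S)" by (simp add: P_def a_def prod_norm)
  also have "\<dots> = (\<Sum>S\<in>G. P S) + (\<Sum>S\<in>Sset - G. P S)"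
    using sum.subset_diff[OF GS finSset, of P] by (simp add: add.commute)
  also have "(\<Sum>S\<in>G. P S) = real C * M"
  proof -
    have "(\<Sum>S\<in>G. P S) = (\<Sum>S\<in>G. M)"
      by (rule sum.cong) (auto simp: G_def M_def dest: key)
    then show ?thesis using cG by simp
  qed
  also have "(\<Sum>S\<in>Sset - G. P S) \<le> (\<Sum>S\<in>Sset - G. M / R)"
  proof (rule sum_mono)
    fix S assume "S \<in> Sset - G"
    then have "R * P S \<le> M" using key[of S] by (auto simp: G_def M_def)
    then show "P S \<le> M / R" using Rpos by (simp add: pos_le_divide_eq mult.commute)
  qed
  also have "(\<Sum>S\<in>Sset - G. M / R) = (real (d choose l) - real C) * M / R"
    using cBad by simp
  finally have main: "cmod (esym d Z (d - l)) \<le> (real C + (real (d choose l) - real C) / R) * M"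
    by (simp add: algebra_simps)
  have MT: "M = m ^ (i2 - l) * (\<Prod>j\<in>{i2+1..d}. a j)"
  proof -
    have "T = {l+1..i2} \<union> {i2+1..d}" using l i2d by (auto simp: T_def)
    then have "M = P {l+1..i2} * P {i2+1..d}" unfolding M_def P_def
      by (simp add: prod.union_disjoint ivl_disj_int)
    moreover have "P {l+1..i2} = m ^ (i2 - l)"
    proof -
      have "P {l+1..i2} = (\<Prod>j\<in>{l+1..i2}. m)" unfolding P_def
        by (rule prod.cong) (use l in \<open>auto intro: blk\<close>)
      then show ?thesis by simp
    qed
    ultimately show ?thesis by (simp add: P_def)
  qed
  have part1: "cmod (esym d Z (d - l))
           \<le> (real ((i2 - i1) choose (i2 - l))
               + (real (d choose l) - real ((i2 - i1) choose (i2 - l))) / jumpR d Z)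
             * cmod (Z i2) ^ (i2 - l) * (\<Prod>j\<in>{i2+1..d}. cmod (Z j))"
    using main unfolding MT by (simp add: C_def R_def m_def a_def mult.assoc)
  have "real (d choose l) - real C < 2 ^ d"
  proof -
    have "0 < C" unfolding C_def using l by simp
    moreover have "d choose l \<le> 2 ^ d" by (rule binomial_le_pow2)
    ultimately show ?thesis by (metis of_nat_le_iff of_nat_numeral of_nat_power of_nat_0_less_iff diff_less_eq less_add_same_cancel1 order_le_less_trans)
  qed
  then have part2: "(real (d choose l) - real C) / R < 2 ^ d / R"
    using Rpos by (rule divide_strict_right_mono)
  show ?thesis using part1 part2 by (simp add: C_def R_def)
qed
end
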